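(* The reduction relation $\to_{{\tt j}/{\tt o}}$ on $\lambda j$-terms is strongly normalizing (terminating).
   Context: $\lambda j$-terms are generated by $t,u::= x\mid \lambda x.t\mid t\,u\mid t[x/u]$; $\lambda x.t$ and $t[x/u]$ bind $x$ in $t$ (not in $u$), and terms are considered modulo $\alpha$-conversion. $\mathrm{fv}(t)$ is the set of free variables, $t\{x/u\}$ is capture-avoiding meta-level substitution, and $|t|_x$ is the number of free occurrences of $x$ in $t$. If $|t|_x=n\ge2$, $t_{[y]_x}$ denotes any term obtained from $t$ by replacing $k$ of the free occurrences of $x$ by a fresh variable $y$, for some $1\le k\le n-1$. $\to_{\tt j}$ is the closure under all contexts of: $({\tt w})$ $t[x/u]\to t$ if $|t|_x=0$; $({\tt d})$ $t[x/u]\to t\{x/u\}$ if $|t|_x=1$; $({\tt c})$ $t[x/u]\to t_{[y]_x}[x/u][y/u]$ if $|t|_x\ge2$, $y$ fresh. $\equiv_{\tt o}$ is the smallest equivalence closed under contexts containing $t[x/s][y/v]\sim t[y/v][x/s]$ if $x\notin\mathrm{fv}(v)$ and $y\notin\mathrm{fv}(s)$; $\lambda y.(t[x/s])\sim(\lambda y.t)[x/s]$ if $y\notin\mathrm{fv}(s)$; and $t[x/s]\,v\sim(t\,v)[x/s]$ if $x\notin\mathrm{fv}(v)$. $t\to_{{\tt j}/{\tt o}}u$ iff $t\equiv_{\tt o}t'\to_{\tt j}u'\equiv_{\tt o}u$ for some $t',u'$. *)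

theory Defs
  imports Main
begin

text \<open>lambda-j terms in de Bruijn notation (terms modulo alpha-conversion).
  Sub t u represents t[x/u], where x is the bound index 0 of t.\<close>

datatype trm = Var nat | Lam trm | App trm trm | Sub trm trm

fun lift :: "nat \<Rightarrow> trm \<Rightarrow> trm" where
  "lift k (Var i) = (if i < k then Var i else Var (Suc i))"
| "lift k (Lam t) = Lam (lift (Suc k) t)"
| "lift k (App t u) = App (lift k t) (lift k u)"
| "lift k (Sub t u) = Sub (lift (Suc k) t) (lift k u)"

text \<open>Decrement indices > k (used when index k does not occur).\<close>
fun lower :: "nat \<Rightarrow> trm \<Rightarrow> trm" where
  "lower k (Var i) = (if i \<le> k then Var i else Var (i - 1))"
| "lower k (Lam t) = Lam (lower (Suc k) t)"
| "lower k (App t u) = App (lower k t) (lower k u)"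
| "lower k (Sub t u) = Sub (lower (Suc k) t) (lower k u)"

fun subst :: "nat \<Rightarrow> trm \<Rightarrow> trm \<Rightarrow> trm" where
  "subst k (Var i) u = (if i < k then Var i else if i = k then u else Var (i - 1))"
| "subst k (Lam t) u = Lam (subst (Suc k) t (lift 0 u))"
| "subst k (App t1 t2) u = App (subst k t1 u) (subst k t2 u)"
| "subst k (Sub t1 t2) u = Sub (subst (Suc k) t1 (lift 0 u)) (subst k t2 u)"

fun occ :: "nat \<Rightarrow> trm \<Rightarrow> nat" where
  "occ k (Var i) = (if i = k then 1 else 0)"
| "occ k (Lam t) = occ (Suc k) t"
| "occ k (App t u) = occ k t + occ k u"
| "occ k (Sub t u) = occ (Suc k) t + occ k u"

fun swap :: "nat \<Rightarrow> trm \<Rightarrow> trm" where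
  "swap k (Var i) = (if i = k then Var (Suc k) else if i = Suc k then Var k else Var i)"
| "swap k (Lam t) = Lam (swap (Suc k) t)"
| "swap k (App t u) = App (swap k t) (swap k u)"
| "swap k (Sub t u) = Sub (swap (Suc k) t) (swap k u)"

text \<open>rename d t s: s arises from t by replacing some occurrences of index d (x)
  by index d+1 (y), at binder depth d.\<close>
inductive rename :: "nat \<Rightarrow> trm \<Rightarrow> trm \<Rightarrow> bool" where
  keep: "rename d (Var i) (Var i)"
| change: "rename d (Var d) (Var (Suc d))"
| lam: "rename (Suc d) t s \<Longrightarrow> rename d (Lam t) (Lam s)"
| app: "rename d t1 s1 \<Longrightarrow> rename d t2 s2 \<Longrightarrow> rename d (App t1 t2) (App s1 s2)"
| sub: "rename (Suc d) t1 s1 \<Longrightarrow> rename d t2 s2 \<Longrightarrow> rename d (Sub t1 t2) (Sub s1 s2)"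

inductive jstep :: "trm \<Rightarrow> trm \<Rightarrow> bool" where
  w: "occ 0 t = 0 \<Longrightarrow> jstep (Sub t u) (subst 0 t u)"
| d: "occ 0 t = 1 \<Longrightarrow> jstep (Sub t u) (subst 0 t u)"
| c: "occ 0 t \<ge> 2 \<Longrightarrow> rename 0 (lift 1 t) s \<Longrightarrow> occ 0 s \<ge> 1 \<Longrightarrow> occ 1 s \<ge> 1
      \<Longrightarrow> jstep (Sub t u) (Sub (Sub s (lift 0 u)) u)"
| lam: "jstep t t' \<Longrightarrow> jstep (Lam t) (Lam t')"
| appL: "jstep t t' \<Longrightarrow> jstep (App t u) (App t' u)"
| appR: "jstep u u' \<Longrightarrow> jstep (App t u) (App t u')"
| subL: "jstep t t' \<Longrightarrow> jstep (Sub t u) (Sub t' u)"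
| subR: "jstep u u' \<Longrightarrow> jstep (Sub t u) (Sub t u')"

inductive oeq :: "trm \<Rightarrow> trm \<Rightarrow> bool" where
  comm: "occ 0 s = 0 \<Longrightarrow>
     oeq (Sub (Sub t s) v) (Sub (Sub (swap 0 t) (lift 0 v)) (lower 0 s))"
| lam_sub: "occ 0 s = 0 \<Longrightarrow> oeq (Lam (Sub t s)) (Sub (Lam (swap 0 t)) (lower 0 s))"
| app_sub: "oeq (App (Sub t s) v) (Sub (App t (lift 0 v)) s)"
| refl: "oeq t t"
| sym: "oeq t u \<Longrightarrow> oeq u t"
| trans: "oeq t u \<Longrightarrow> oeq u v \<Longrightarrow> oeq t v"
| lam: "oeq t t' \<Longrightarrow> oeq (Lam t) (Lam t')"
| appL: "oeq t t' \<Longrightarrow> oeq (App t u) (App t' u)"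
| appR: "oeq u u' \<Longrightarrow> oeq (App t u) (App t u')"
| subL: "oeq t t' \<Longrightarrow> oeq (Sub t u) (Sub t' u)"
| subR: "oeq u u' \<Longrightarrow> oeq (Sub t u) (Sub t u')"

definition jo :: "trm \<Rightarrow> trm \<Rightarrow> bool" where
  "jo t u \<longleftrightarrow> (\<exists>t' u'. oeq t t' \<and> jstep t' u' \<and> oeq u' u)"

end

theory Submission
  imports Defs
begin

fun wM :: "nat \<Rightarrow> trm \<Rightarrow> nat" where
  "wM k (Var i) = (if i = k then 1 else 0)"
| "wM k (Lam t) = wM (Suc k) t"
| "wM k (App t u) = wM k t + wM k u"
| "wM k (Sub t u) = wM (Suc k) t + max (wM 0 t) 1 * wM k u"

fun wQ :: "trm \<Rightarrow> nat" where
  "wQ (Var i) = 1"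
| "wQ (Lam t) = wQ t"
| "wQ (App t u) = wQ t + wQ u"
| "wQ (Sub t u) = wQ t + (max (wM 0 t) 1)^2 * wQ u"

lemma wQ_pos: "wQ t \<ge> 1"
  by (induction t) auto

lemma occ_le_wM: "occ k t \<le> wM k t"
proof (induction t arbitrary: k)
  case (Sub t1 t2)
  have "occ k t2 \<le> max (wM 0 t1) 1 * wM k t2"
    using Sub.IH(2)[of k] by (metis le_trans max.cobounded2 mult_1 mult_le_mono1)
  then show ?case using Sub.IH(1)[of "Suc k"] by simp
next
  case (App t1 t2) then show ?case by (simp add: add_mono)
qed auto

lemma occ0_wM: "occ k t = 0 \<Longrightarrow> wM k t = 0"
  by (induction t arbitrary: k) auto

lemma wM_lift: "wM j (lift k t) = (if j < k then wM j t else if j = k then 0 else wM (j - 1) t)"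
proof (induction t arbitrary: k j)
  case (Lam t) then show ?case by auto
next
  case (Sub t1 t2)
  have "wM 0 (lift (Suc k) t1) = wM 0 t1" using Sub.IH(1)[where k="Suc k" and j=0] by simp
  then show ?case using Sub.IH(1)[where k="Suc k" and j="Suc j"] Sub.IH(2)[where k=k and j=j] by auto
qed auto

lemma wQ_lift: "wQ (lift k t) = wQ t"
  by (induction t arbitrary: k) (auto simp: wM_lift)

lemma wM_swap: "wM j (swap k t) = wM (if j = k then Suc k else if j = Suc k then k else j) t"
proof (induction t arbitrary: k j)
  case (Lam t) then show ?case by auto
next
  case (Sub t1 t2)
  have "wM 0 (swap (Suc k) t1) = wM 0 t1" using Sub.IH(1)[where k="Suc k" and j=0] by simp
  then show ?case using Sub.IH(1)[where k="Suc k" and j="Suc j"] Sub.IH(2)[where k=k and j=j] by auto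
qed auto

lemma wQ_swap: "wQ (swap k t) = wQ t"
  by (induction t arbitrary: k) (auto simp: wM_swap)

lemma wM_lower: "occ k t = 0 \<Longrightarrow> wM j (lower k t) = (if j < k then wM j t else wM (Suc j) t)"
proof (induction t arbitrary: k j)
  case (Lam t) then show ?case by auto
next
  case (Sub t1 t2)
  have "wM 0 (lower (Suc k) t1) = wM 0 t1" using Sub.IH(1)[where k="Suc k" and j=0] Sub.prems by simp
  then show ?case using Sub.IH(1)[where k="Suc k" and j="Suc j"] Sub.IH(2)[where k=k and j=j] Sub.prems by auto
next
  case (Var i) then show ?case by (cases "i < k") auto
qed auto

lemma wQ_lower: "occ k t = 0 \<Longrightarrow> wQ (lower k t) = wQ t"
  by (induction t arbitrary: k) (auto simp: wM_lower)

lemma wM_subst: "wM j (subst k t u) = (if j < k then wM j t else wM (Suc j) t) + wM k t * wM j u"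
proof (induction t arbitrary: k j u)
  case (Var i) then show ?case by auto
next
  case (Lam t) then show ?case by (auto simp: wM_lift)
next
  case (App t1 t2) then show ?case by (auto simp: algebra_simps)
next
  case (Sub t1 t2)
  have h: "wM 0 (subst (Suc k) t1 (lift 0 u)) = wM 0 t1" using Sub.IH(1)[where k="Suc k" and j=0 and u="lift 0 u"] by (simp add: wM_lift)
  show ?case using Sub.IH(1)[where k="Suc k" and j="Suc j" and u="lift 0 u"] Sub.IH(2)[where k=k and j=j and u=u]
    by (simp add: h wM_lift algebra_simps)
qed

lemma wQ_subst: "occ k t \<le> 1 \<Longrightarrow> wQ (subst k t u) + (wM k t)^2 = wQ t + (wM k t)^2 * wQ u"
proof (induction t arbitrary: k u)
  case (Var i) then show ?case by auto
next
  case (Lam t) then show ?case by (auto simp: wQ_lift)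
next
  case (App t1 t2)
  show ?case
  proof (cases "occ k t1 = 0")
    case True
    then have "wM k t1 = 0" by (rule occ0_wM)
    then show ?thesis using App.IH(1)[of k u] App.IH(2)[of k u] App.prems True by (auto simp: algebra_simps power2_eq_square)
  next
    case False
    then have "occ k t2 = 0" using App.prems by simp
    then have "wM k t2 = 0" by (rule occ0_wM)
    then show ?thesis using App.IH(1)[of k u] App.IH(2)[of k u] App.prems \<open>occ k t2 = 0\<close> by (auto simp: algebra_simps power2_eq_square)
  qed
next
  case (Sub t1 t2)
  have h: "wM 0 (subst (Suc k) t1 (lift 0 u)) = wM 0 t1" by (simp add: wM_subst wM_lift)
  define m where "m = max (wM 0 t1) 1"
  show ?case
  proof (cases "occ (Suc k) t1 = 0")
    case True
    then have "wM (Suc k) t1 = 0" by (rule occ0_wM)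
    have o2: "occ k t2 \<le> 1" using Sub.prems by simp
    have "wQ (subst (Suc k) t1 (lift 0 u)) = wQ t1"
      using Sub.IH(1)[of "Suc k" "lift 0 u"] True \<open>wM (Suc k) t1 = 0\<close> by simp
    moreover have E: "wQ (subst k t2 u) + (wM k t2)^2 = wQ t2 + (wM k t2)^2 * wQ u"
      using Sub.IH(2) o2 by blast
    ultimately have "wQ (subst k (Sub t1 t2) u) + m^2 * (wM k t2)^2
        = wQ t1 + m^2 * (wQ t2 + (wM k t2)^2 * wQ u)"
    proof -
      assume q1: "wQ (subst (Suc k) t1 (lift 0 u)) = wQ t1"
      assume q2: "wQ (subst k t2 u) + (wM k t2)^2 = wQ t2 + (wM k t2)^2 * wQ u"
      have "wQ (subst k (Sub t1 t2) u) + m^2 * (wM k t2)^2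
          = wQ t1 + m^2 * (wQ (subst k t2 u) + (wM k t2)^2)"
        using q1 by (simp add: h m_def distrib_left)
      also have "\<dots> = wQ t1 + m^2 * (wQ t2 + (wM k t2)^2 * wQ u)" using q2 by simp
      finally show ?thesis .
    qed
    then show ?thesis using \<open>wM (Suc k) t1 = 0\<close>
      by (simp add: m_def power_mult_distrib algebra_simps)
  next
    case False
    then have "occ k t2 = 0" using Sub.prems by simp
    then have z: "wM k t2 = 0" by (rule occ0_wM)
    have "wQ (subst k t2 u) = wQ t2" using Sub.IH(2)[of k u] \<open>occ k t2 = 0\<close> z by simp
    moreover have "wQ (subst (Suc k) t1 (lift 0 u)) + (wM (Suc k) t1)^2 = wQ t1 + (wM (Suc k) t1)^2 * wQ u"
      using Sub.IH(1)[of "Suc k" "lift 0 u"] Sub.prems by (simp add: wQ_lift)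
    ultimately show ?thesis using z by (simp add: h algebra_simps)
  qed
qed

lemma rename_w: "rename d t s \<Longrightarrow> wQ s = wQ t \<and> (\<forall>j. j \<noteq> d \<and> j \<noteq> Suc d \<longrightarrow> wM j s = wM j t)
   \<and> wM d s + wM (Suc d) s = wM d t + wM (Suc d) t"
proof (induction rule: rename.induct)
  case (sub d t1 s1 t2 s2)
  have e: "wM 0 s1 = wM 0 t1" using sub.IH(1) by auto
  have a: "\<forall>j. j \<noteq> d \<and> j \<noteq> Suc d \<longrightarrow> wM j (Sub s1 s2) = wM j (Sub t1 t2)"
    using sub.IH by (simp add: e)
  have b: "wM d (Sub s1 s2) + wM (Suc d) (Sub s1 s2) = wM d (Sub t1 t2) + wM (Suc d) (Sub t1 t2)"
  proof -
    have "wM d (Sub s1 s2) + wM (Suc d) (Sub s1 s2) = (wM (Suc d) s1 + wM (Suc (Suc d)) s1)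
       + max (wM 0 t1) 1 * (wM d s2 + wM (Suc d) s2)" by (simp add: e algebra_simps)
    also have "\<dots> = (wM (Suc d) t1 + wM (Suc (Suc d)) t1)
       + max (wM 0 t1) 1 * (wM d t2 + wM (Suc d) t2)" using sub.IH by simp
    also have "\<dots> = wM d (Sub t1 t2) + wM (Suc d) (Sub t1 t2)" by (simp add: algebra_simps)
    finally show ?thesis .
  qed
  show ?case using a b sub.IH by (simp add: e)
qed auto

lemma jstep_dec: "jstep t t' \<Longrightarrow> wQ t' < wQ t \<and> (\<forall>j. wM j t' \<le> wM j t)"
proof (induction rule: jstep.induct)
  case (w t u)
  have z: "wM 0 t = 0" using w occ0_wM by blast
  have "wQ (subst 0 t u) = wQ t" using wQ_subst[of 0 t u] w z by simp
  then show ?case using wQ_pos[of u] z by (simp add: wM_subst)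
next
  case (d t u)
  have p: "wM 0 t \<ge> 1" using occ_le_wM[of 0 t] d by simp
  have "wQ (subst 0 t u) + (wM 0 t)^2 = wQ t + (wM 0 t)^2 * wQ u" using wQ_subst[of 0 t u] d by simp
  moreover have "(wM 0 t)^2 \<ge> 1" using p by simp
  ultimately have "wQ (subst 0 t u) < wQ t + (wM 0 t)^2 * wQ u" by linarith
  then show ?case using p by (simp add: wM_subst max_def)
next
  case (c t s u)
  obtain a b where ab: "a = wM 0 s" "b = wM 1 s" by blast
  have r: "wQ s = wQ (lift 1 t)" "\<forall>j. j \<noteq> 0 \<and> j \<noteq> 1 \<longrightarrow> wM j s = wM j (lift 1 t)"
     "wM 0 s + wM 1 s = wM 0 (lift 1 t) + wM 1 (lift 1 t)"
    using rename_w[OF c(2)] by auto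
  have a1: "a \<ge> 1" using occ_le_wM[of 0 s] c(3) ab by simp
  have b1: "b \<ge> 1" using occ_le_wM[of 1 s] c(4) ab by simp
  have sum: "wM 0 t = a + b" using r(3) ab by (simp add: wM_lift)
  have qs: "wQ s = wQ t" using r(1) by (simp add: wQ_lift)
  have ms: "wM (Suc (Suc j)) s = wM (Suc j) t" for j using r(2) by (simp add: wM_lift)
  have m0: "wM 0 (Sub s (lift 0 u)) = b" using ab by (simp add: wM_lift)
  have "a^2 + b^2 < (a+b)^2" using a1 b1 by (simp add: power2_eq_square algebra_simps)
  then have "(a^2 + b^2) * wQ u < (a+b)^2 * wQ u" using wQ_pos[of u] by simp
  then have q: "wQ (Sub (Sub s (lift 0 u)) u) < wQ (Sub t u)"
    using a1 b1 sum qs m0 ab by (simp add: wQ_lift max_def algebra_simps)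
  have "wM j (Sub (Sub s (lift 0 u)) u) = wM j (Sub t u)" for j
    using a1 b1 sum ms m0 ab by (simp add: wM_lift max_def algebra_simps)
  then show ?case using q by simp
next
  case (subL t t' u)
  have "max (wM 0 t') 1 \<le> max (wM 0 t) 1" using subL.IH by (meson max.mono order_refl)
  then have "(max (wM 0 t') 1)^2 * wQ u \<le> (max (wM 0 t) 1)^2 * wQ u"
    by (simp add: power_mono)
  moreover have "max (wM 0 t') 1 * wM j u \<le> max (wM 0 t) 1 * wM j u" for j
    using \<open>max (wM 0 t') 1 \<le> max (wM 0 t) 1\<close> by (rule mult_le_mono1)
  ultimately show ?case using subL.IH by (simp only: wQ.simps wM.simps) (meson add_le_mono add_less_le_mono)
next
  case (subR u u' t)
  have "(max (wM 0 t) 1)^2 \<ge> 1" by simp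
  then have "(max (wM 0 t) 1)^2 * wQ u' < (max (wM 0 t) 1)^2 * wQ u" using subR.IH by simp
  then show ?case using subR.IH by (simp add: add_le_mono)
qed (auto simp: add_le_mono add_less_le_mono add_le_less_mono)

lemma oeq_inv: "oeq t u \<Longrightarrow> wQ t = wQ u \<and> (\<forall>j. wM j t = wM j u)"
proof (induction rule: oeq.induct)
  case (comm s t v)
  have z: "wM 0 s = 0" using comm occ0_wM by blast
  show ?case using z comm by (simp add: wM_swap wM_lift wM_lower wQ_swap wQ_lift wQ_lower algebra_simps)
next
  case (lam_sub s t)
  have z: "wM 0 s = 0" using lam_sub occ0_wM by blast
  show ?case using z lam_sub by (simp add: wM_swap wM_lower wQ_swap wQ_lower algebra_simps)
next
  case (app_sub t s v)
  show ?case by (simp add: wM_lift wQ_lift algebra_simps)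
qed auto

theorem lemma26:
  shows "wf {(u, t). jo t u}"
proof (rule wf_subset[OF wf_measure[of wQ]])
  show "{(u, t). jo t u} \<subseteq> measure wQ"
    using jstep_dec oeq_inv unfolding jo_def by fastforce
qed

end
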